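(* Fix $\nu>1$, let $F_{\text{exist}}=\nu(\nu+1)$, $F_{\text{2d}}=\nu(\nu+1)/\sqrt{\nu^2+\nu-1}$, and $2<F<F_{\text{2d}}$. For $\theta\in[0,2\pi]$, $\mu\in\mathbb{R}$ define $$\ell_1(\theta,\mu)=\tfrac{\cos\theta F_{\text{exist}}+F}{FF_{\text{exist}}}\mu-\tfrac12\cos^2\theta-\tfrac F2\cos\theta-\tfrac12,\quad \ell_2(\theta,\mu)=-\tfrac{\cos\theta F_{\text{exist}}+F}{FF_{\text{exist}}}\mu-\tfrac12\cos^2\theta+\tfrac F2\cos\theta-\tfrac12,$$ $$\ell_3(\theta,\mu)=\tfrac{\mu}{F_{\text{exist}}}-\sin^2\theta-1,$$ and let $I$ be the open interval with endpoints $\frac{F^2}{2}-\frac{F^2}{F_{\text{exist}}}\mp\frac{F}{F_{\text{2d}}}\sqrt{F_{\text{2d}}^2-F^2}$. Then the midpoint $\mu_{L,opt}=\frac{F^2}{2}-\frac{F^2}{F_{\text{exist}}}$ of $I$ minimizes over $\mu\in I$ the quantity $\max_{\theta\in[0,2\pi]}\max\{\ell_1(\theta,\mu),\ell_2(\theta,\mu)\}$, and for all $\theta\in[0,2\pi]$, $$\ell_1(\theta,\mu_{L,opt}),\ \ell_2(\theta,\mu_{L,opt})\le\frac{F^2-F_{\text{2d}}^2}{2F_{\text{2d}}^2}<0,\qquad \ell_3(\theta,\mu_{L,opt})\le\frac{F_{\text{exist}}-2}{2F_{\text{exist}}^2}F^2-1<0.$$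
   Context: The functions $\ell_j(\theta,\mu)$ are the leading-order real parts of the three $\mu$-weighted dispersion relations at the upstream endstate of a hydraulic shock of the inviscid Saint-Venant equations in the limit $(k,\eta)=r(\cos\theta,\sin\theta)$, $r\to\infty$. *)

theory Defs
  imports Complex_Main
begin

definition F_exist :: "real \<Rightarrow> real" where
  "F_exist \<nu> = \<nu> * (\<nu> + 1)"

definition F_2d :: "real \<Rightarrow> real" where
  "F_2d \<nu> = \<nu> * (\<nu> + 1) / sqrt (\<nu>\<^sup>2 + \<nu> - 1)"

definition ell1 :: "real \<Rightarrow> real \<Rightarrow> real \<Rightarrow> real \<Rightarrow> real" where
  "ell1 \<nu> F \<theta> \<mu> =
     (cos \<theta> * F_exist \<nu> + F) / (F * F_exist \<nu>) * \<mu>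
     - (cos \<theta>)\<^sup>2 / 2 - F / 2 * cos \<theta> - 1 / 2"

definition ell2 :: "real \<Rightarrow> real \<Rightarrow> real \<Rightarrow> real \<Rightarrow> real" where
  "ell2 \<nu> F \<theta> \<mu> =
     - ((cos \<theta> * F_exist \<nu> + F) / (F * F_exist \<nu>)) * \<mu>
     - (cos \<theta>)\<^sup>2 / 2 + F / 2 * cos \<theta> - 1 / 2"

definition ell3 :: "real \<Rightarrow> real \<Rightarrow> real \<Rightarrow> real \<Rightarrow> real" where
  "ell3 \<nu> F \<theta> \<mu> = \<mu> / F_exist \<nu> - (sin \<theta>)\<^sup>2 - 1"

definition mu_opt :: "real \<Rightarrow> real \<Rightarrow> real" where
  "mu_opt \<nu> F = F\<^sup>2 / 2 - F\<^sup>2 / F_exist \<nu>"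

definition half_width :: "real \<Rightarrow> real \<Rightarrow> real" where
  "half_width \<nu> F = F / F_2d \<nu> * sqrt ((F_2d \<nu>)\<^sup>2 - F\<^sup>2)"

definition I_int :: "real \<Rightarrow> real \<Rightarrow> real set" where
  "I_int \<nu> F = {mu_opt \<nu> F - half_width \<nu> F <..< mu_opt \<nu> F + half_width \<nu> F}"

definition maxL12 :: "real \<Rightarrow> real \<Rightarrow> real \<Rightarrow> real" where
  "maxL12 \<nu> F \<mu> = Sup ((\<lambda>\<theta>. max (ell1 \<nu> F \<theta> \<mu>) (ell2 \<nu> F \<theta> \<mu>)) ` {0..2*pi})"

end

theory Submission
  imports Defs
begin

lemma alg1: "E > 2 \<Longrightarrow> F > 0 \<Longrightarrow> (c * E + F) / (F * E) * (F\<^sup>2 / 2 - F\<^sup>2 / E)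
     - (c)\<^sup>2 / 2 - F / 2 * c - 1 / 2 = - c * F / E + F\<^sup>2/(2*E) - F\<^sup>2/E\<^sup>2 - (c)\<^sup>2/2 - 1/2"
  for E F c :: real
  by (simp add: field_simps power2_eq_square)

lemma alg2: "E > 2 \<Longrightarrow> F > 0 \<Longrightarrow> - ((c * E + F) / (F * E)) * (F\<^sup>2 / 2 - F\<^sup>2 / E)
     - (c)\<^sup>2 / 2 + F / 2 * c - 1 / 2 = c * F / E - F\<^sup>2/(2*E) + F\<^sup>2/E\<^sup>2 - (c)\<^sup>2/2 - 1/2"
  for E F c :: real
  by (simp add: field_simps power2_eq_square)

lemma alg3: "E > 2 \<Longrightarrow> (F\<^sup>2/(2*E) - F\<^sup>2/E\<^sup>2 + F\<^sup>2/(2*E\<^sup>2) - 1/2) - (- c * F / E + F\<^sup>2/(2*E) - F\<^sup>2/E\<^sup>2 - (c)\<^sup>2/2 - 1/2) = (c + F/E)\<^sup>2/2"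
  for E F c :: real
  by (simp add: field_simps power2_eq_square)

lemma alg4: "E > 2 \<Longrightarrow> (F\<^sup>2/(2*E) - F\<^sup>2/E\<^sup>2 + F\<^sup>2/(2*E\<^sup>2) - 1/2) - (c * F / E - F\<^sup>2/(2*E) + F\<^sup>2/E\<^sup>2 - (c)\<^sup>2/2 - 1/2) = (c - F/E)\<^sup>2/2 + F\<^sup>2 * (E - 2) / E\<^sup>2"
  for E F c :: real
  by (simp add: field_simps power2_eq_square)

theorem mainTheorem6:
  fixes \<nu> F :: real
  assumes "\<nu> > 1" and "2 < F" and "F < F_2d \<nu>"
  shows "mu_opt \<nu> F \<in> I_int \<nu> F
    \<and> (\<forall>\<mu>\<in>I_int \<nu> F. maxL12 \<nu> F (mu_opt \<nu> F) \<le> maxL12 \<nu> F \<mu>)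
    \<and> (\<forall>\<theta>\<in>{0..2*pi}.
          ell1 \<nu> F \<theta> (mu_opt \<nu> F) \<le> (F\<^sup>2 - (F_2d \<nu>)\<^sup>2) / (2 * (F_2d \<nu>)\<^sup>2)
        \<and> ell2 \<nu> F \<theta> (mu_opt \<nu> F) \<le> (F\<^sup>2 - (F_2d \<nu>)\<^sup>2) / (2 * (F_2d \<nu>)\<^sup>2)
        \<and> ell3 \<nu> F \<theta> (mu_opt \<nu> F) \<le> (F_exist \<nu> - 2) / (2 * (F_exist \<nu>)\<^sup>2) * F\<^sup>2 - 1)
    \<and> (F\<^sup>2 - (F_2d \<nu>)\<^sup>2) / (2 * (F_2d \<nu>)\<^sup>2) < 0
    \<and> (F_exist \<nu> - 2) / (2 * (F_exist \<nu>)\<^sup>2) * F\<^sup>2 - 1 < 0"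
proof -
  define E where "E = F_exist \<nu>"
  define D where "D = F_2d \<nu>"
  have E2: "E > 2" unfolding E_def F_exist_def using mult_strict_mono[of 1 \<nu> 2 "\<nu>+1"] assms(1) by simp
  have sq: "\<nu>\<^sup>2 + \<nu> - 1 = E - 1" unfolding E_def F_exist_def by (simp add: power2_eq_square algebra_simps)
  have D_def': "D = E / sqrt (E - 1)" unfolding D_def F_2d_def sq by (simp add: E_def F_exist_def)
  have Dpos: "D > 0" using E2 D_def' by simp
  have D2: "D\<^sup>2 = E\<^sup>2 / (E - 1)" using E2 by (simp add: D_def' power_divide)
  have FD: "F < D" using assms(3) D_def by simp
  have F2D2: "F\<^sup>2 < D\<^sup>2" using FD assms(2) by (smt (verit) power_strict_mono zero_le_numeral pos2)
  have F2E: "F\<^sup>2 * (E - 1) < E\<^sup>2" using F2D2 D2 E2 by (simp add: field_simps)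
  have Fpos: "F > 0" using assms(2) by simp
  have bound1: "(F\<^sup>2 - D\<^sup>2) / (2 * D\<^sup>2) = F\<^sup>2 * (E - 1) / (2 * E\<^sup>2) - 1/2"
    unfolding D2 using E2 by (simp add: field_simps power2_eq_square)
  have neg1: "(F\<^sup>2 - D\<^sup>2) / (2 * D\<^sup>2) < 0" using F2D2 Dpos by (simp add: divide_neg_pos)
  have neg2: "(E - 2) / (2 * E\<^sup>2) * F\<^sup>2 - 1 < 0"
  proof -
    have "(E - 2) * F\<^sup>2 \<le> (E - 1) * F\<^sup>2" by (simp add: mult_right_mono)
    also have "\<dots> < E\<^sup>2" using F2E by (simp add: mult.commute)
    also have "\<dots> < 2 * E\<^sup>2" using E2 by simp
    finally have "(E - 2) * F\<^sup>2 < 2 * E\<^sup>2" .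
    then show ?thesis using E2 by (simp add: field_simps)
  qed
  define M where "M = (F\<^sup>2 - D\<^sup>2) / (2 * D\<^sup>2)"
  have e1: "ell1 \<nu> F \<theta> (mu_opt \<nu> F) = - cos \<theta> * F / E + F\<^sup>2/(2*E) - F\<^sup>2/E\<^sup>2 - (cos \<theta>)\<^sup>2/2 - 1/2" for \<theta>
    unfolding ell1_def mu_opt_def E_def[symmetric] using E2 Fpos by (rule alg1)
  have e2: "ell2 \<nu> F \<theta> (mu_opt \<nu> F) = cos \<theta> * F / E - F\<^sup>2/(2*E) + F\<^sup>2/E\<^sup>2 - (cos \<theta>)\<^sup>2/2 - 1/2" for \<theta>
    unfolding ell2_def mu_opt_def E_def[symmetric] using E2 Fpos by (rule alg2)
  have Mform: "M = F\<^sup>2/(2*E) - F\<^sup>2/E\<^sup>2 + F\<^sup>2/(2*E\<^sup>2) - 1/2"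
    unfolding M_def bound1 using E2 by (simp add: field_simps power2_eq_square)
  have b1: "ell1 \<nu> F \<theta> (mu_opt \<nu> F) \<le> M" for \<theta>
  proof -
    have "0 \<le> (cos \<theta> + F/E)\<^sup>2/2" by simp
    then show ?thesis unfolding e1 Mform using alg3[OF E2, of F "cos \<theta>"] by linarith
  qed
  have b2: "ell2 \<nu> F \<theta> (mu_opt \<nu> F) \<le> M" for \<theta>
  proof -
    have "0 \<le> (cos \<theta> - F/E)\<^sup>2/2 + F\<^sup>2 * (E - 2) / E\<^sup>2" using E2 by simp
    then show ?thesis unfolding e2 Mform using alg4[OF E2, of F "cos \<theta>"] by linarith
  qed
  have b3: "ell3 \<nu> F \<theta> (mu_opt \<nu> F) \<le> (E - 2) / (2 * E\<^sup>2) * F\<^sup>2 - 1" for \<theta>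
  proof -
    have "ell3 \<nu> F \<theta> (mu_opt \<nu> F) = (F\<^sup>2/2 - F\<^sup>2/E)/E - (sin \<theta>)\<^sup>2 - 1"
      unfolding ell3_def mu_opt_def E_def by simp
    also have "\<dots> \<le> (F\<^sup>2/2 - F\<^sup>2/E)/E - 1" by simp
    also have "\<dots> = (E - 2) / (2 * E\<^sup>2) * F\<^sup>2 - 1" using E2 by (simp add: field_simps power2_eq_square)
    finally show ?thesis .
  qed
  have hw: "half_width \<nu> F > 0"
    unfolding half_width_def D_def[symmetric] using Fpos Dpos F2D2 by simp
  have inI: "mu_opt \<nu> F \<in> I_int \<nu> F" unfolding I_int_def using hw by simp
  define t where "t = arccos (- F / E)"
  have FE1: "F / E \<le> 1"
  proof -
    have "F\<^sup>2 < E\<^sup>2" using F2E E2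
      by (smt (verit) mult_le_cancel_left1 zero_le_power2)
    then have "F < E" using E2 Fpos by (smt (verit) power_mono)
    then show ?thesis using E2 by simp
  qed
  have FE0: "F / E \<ge> 0" using E2 Fpos by simp
  have ct: "cos t = - F / E" unfolding t_def using FE1 FE0 by (simp add: cos_arccos)
  have tin: "t \<in> {0..2*pi}" unfolding t_def using arccos_lbound arccos_ubound FE1 FE0
    by (smt (verit, best) atLeastAtMost_iff divide_minus_left pi_gt_zero)
  have at: "ell1 \<nu> F t \<mu> = M" for \<mu>
  proof -
    have z: "(cos t * F_exist \<nu> + F) / (F * F_exist \<nu>) = 0" using ct E2 unfolding E_def by simp
    have "ell1 \<nu> F t \<mu> = ell1 \<nu> F t (mu_opt \<nu> F)" unfolding ell1_def z by simp
    also have "\<dots> = M" unfolding e1 Mform ct using E2 by (simp add: field_simps power2_eq_square)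
    finally show ?thesis .
  qed
  have maxopt: "maxL12 \<nu> F (mu_opt \<nu> F) \<le> M"
    unfolding maxL12_def
    by (rule cSup_least) (use b1 b2 in auto)
  have bdd: "bdd_above ((\<lambda>\<theta>. max (ell1 \<nu> F \<theta> \<mu>) (ell2 \<nu> F \<theta> \<mu>)) ` {0..2*pi})" for \<mu>
  proof -
    have "continuous_on {0..2*pi} (\<lambda>\<theta>. max (ell1 \<nu> F \<theta> \<mu>) (ell2 \<nu> F \<theta> \<mu>))"
      unfolding ell1_def ell2_def using E2 Fpos unfolding E_def by (intro continuous_intros) auto
    from continuous_attains_sup[OF compact_Icc _ this] obtain x where
      "\<forall>y\<in>{0..2*pi}. max (ell1 \<nu> F y \<mu>) (ell2 \<nu> F y \<mu>) \<le> max (ell1 \<nu> F x \<mu>) (ell2 \<nu> F x \<mu>)"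
      by auto
    then show ?thesis unfolding bdd_above_def by blast
  qed
  have low: "M \<le> maxL12 \<nu> F \<mu>" for \<mu>
  proof -
    have "M \<le> max (ell1 \<nu> F t \<mu>) (ell2 \<nu> F t \<mu>)" using at by simp
    also have "\<dots> \<le> maxL12 \<nu> F \<mu>" unfolding maxL12_def
      by (rule cSup_upper) (use tin bdd in auto)
    finally show ?thesis .
  qed
  show ?thesis
    using inI maxopt low b1 b2 b3 neg1 neg2
    unfolding M_def D_def E_def
    by (meson order_trans)
qed

end
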